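(* Let $f$ be a transcendental entire function on $\mathbb{C}$ and let $P,Q$ be polynomials such that $P-Q$ is non-constant. Then $f+P$ and $f+Q$ are algebraically independent over $\mathbb{C}$. *)

theory Defs
  imports "HOL-Complex_Analysis.Complex_Analysis" "HOL-Computational_Algebra.Polynomial"
begin

text \<open>Bivariate polynomials over C are represented as complex poly poly
  (polynomials in a second variable Y with coefficients in C[X]).
  eval2 R a b evaluates R at X = a, Y = b.\<close>
definition eval2 :: "complex poly poly \<Rightarrow> complex \<Rightarrow> complex \<Rightarrow> complex" where
  "eval2 R a b = poly (poly R [:b:]) a"

definition transcendental_entire :: "(complex \<Rightarrow> complex) \<Rightarrow> bool" where
  "transcendental_entire f \<longleftrightarrow> f holomorphic_on UNIV \<and> \<not> (\<exists>p. \<forall>z. f z = poly p z)"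

definition alg_independent :: "(complex \<Rightarrow> complex) \<Rightarrow> (complex \<Rightarrow> complex) \<Rightarrow> bool" where
  "alg_independent g h \<longleftrightarrow> (\<forall>R. R \<noteq> 0 \<longrightarrow> \<not> (\<forall>z. eval2 R (g z) (h z) = 0))"

end

theory Submission
  imports Defs "HOL-Computational_Algebra.Fundamental_Theorem_Algebra"
begin

lemma lift_const_eval:
  "poly (map_poly (\<lambda>c. [:c:]) (p::complex poly)) [:u:] = [:poly p u:]"
  by (induction p) (auto simp: map_poly_pCons)

lemma eval_S:
  fixes R :: "complex poly poly" and D :: "complex poly"
  shows "eval2 (poly (map_poly (map_poly (\<lambda>c. [:c:])) R) [:D, 1:]) z u
         = eval2 R u (u + poly D z)"
proof (induction R)
  case 0
  then show ?case by (simp add: eval2_def)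
next
  case (pCons c R)
  have m0: "map_poly (\<lambda>c::complex. [:c:]) 0 = 0" by simp
  show ?case using pCons
    by (simp add: eval2_def map_poly_pCons[of "map_poly (\<lambda>c. [:c:])", OF m0]
        lift_const_eval algebra_simps)
qed

lemma coeff_eval_inner:
  "coeff (poly (R::complex poly poly) [:b:]) k = poly (map_poly (\<lambda>p. coeff p k) R) b"
  by (induction R) (auto simp: map_poly_pCons)

lemma eval2_zero_imp:
  assumes "\<And>a b. eval2 R a b = 0"
  shows "R = 0"
proof -
  have "\<And>b. poly R [:b:] = 0" using assms poly_all_0_iff_0 unfolding eval2_def by blast
  then have "\<And>k b. poly (map_poly (\<lambda>p. coeff p k) R) b = 0"
    by (metis coeff_eval_inner coeff_0)
  then have "\<And>k. map_poly (\<lambda>p. coeff p k) R = 0" using poly_all_0_iff_0 by blast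
  then have "\<And>k j. coeff (coeff R j) k = 0"
    by (metis coeff_0 coeff_map_poly zero_poly.rep_eq)
  then show ?thesis by (metis leading_coeff_0_iff poly_eqI coeff_0)
qed


lemma cauchy_bound:
  fixes a :: "nat \<Rightarrow> complex" and w :: complex
  assumes eq: "(\<Sum>k\<le>n. a k * w^k) = 0" and an: "a n \<noteq> 0"
  shows "norm w \<le> 1 + (\<Sum>k<n. norm (a k)) / norm (a n)"
proof (cases "norm w \<le> 1")
  case True
  have "0 \<le> (\<Sum>k<n. norm (a k)) / norm (a n)" by (simp add: sum_nonneg)
  then show ?thesis using True by linarith
next
  case False
  have n0: "n \<noteq> 0"
  proof
    assume "n = 0" then show False using eq an by simp
  qed
  then obtain m where m: "n = Suc m" by (cases n) auto
  have "a n * w^n = - (\<Sum>k<n. a k * w^k)"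
    using eq by (simp add: m add_eq_0_iff2 atMost_Suc lessThan_Suc_atMost[symmetric])
  then have "norm (a n) * norm w ^ n = norm (\<Sum>k<n. a k * w^k)"
    by (metis norm_minus_cancel norm_mult norm_power)
  also have "\<dots> \<le> (\<Sum>k<n. norm (a k) * norm w ^ k)"
    by (rule order_trans[OF norm_sum]) (simp add: norm_mult norm_power)
  also have "\<dots> \<le> (\<Sum>k<n. norm (a k) * norm w ^ m)"
    using False m by (intro sum_mono mult_left_mono power_increasing) auto
  also have "\<dots> = (\<Sum>k<n. norm (a k)) * norm w ^ m" by (simp add: sum_distrib_right)
  finally have "norm (a n) * norm w * norm w ^ m \<le> (\<Sum>k<n. norm (a k)) * norm w ^ m"
    by (simp add: m mult.assoc)
  then have "norm (a n) * norm w \<le> (\<Sum>k<n. norm (a k))"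
    using False by (simp add: mult_le_cancel_right) (smt (verit) norm_ge_zero zero_less_power)
  then have "norm w \<le> (\<Sum>k<n. norm (a k)) / norm (a n)"
    using an by (simp add: field_simps)
  then show ?thesis by linarith
qed

lemma poly_upper:
  fixes p :: "complex poly"
  assumes "1 \<le> norm z" "degree p \<le> N"
  shows "norm (poly p z) \<le> (\<Sum>i\<le>degree p. norm (coeff p i)) * norm z ^ N"
proof -
  have "norm (poly p z) \<le> (\<Sum>i\<le>degree p. norm (coeff p i) * norm z ^ i)"
    unfolding poly_altdef by (rule order_trans[OF norm_sum]) (simp add: norm_mult norm_power)
  also have "\<dots> \<le> (\<Sum>i\<le>degree p. norm (coeff p i) * norm z ^ N)"
    using assms by (intro sum_mono mult_left_mono power_increasing) auto
  finally show ?thesis by (simp add: sum_distrib_right)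
qed

lemma poly_lower:
  fixes q :: "complex poly"
  assumes "q \<noteq> 0"
  shows "\<exists>c>0. \<exists>r. \<forall>z. r \<le> norm z \<longrightarrow> c \<le> norm (poly q z)"
proof (cases "degree q = 0")
  case True
  then obtain a where "q = [:a:]" by (metis degree_eq_zeroE)
  then show ?thesis using assms by (intro exI[of _ "norm a"]) auto
next
  case False
  obtain a p where q: "q = pCons a p" by (cases q) auto
  then have "p \<noteq> 0" using False by auto
  from poly_infinity[OF this, of 1 a] show ?thesis unfolding q using zero_less_one by blast
qed

lemma eval2_expand:
  "eval2 S z u = (\<Sum>k\<le>degree S. poly (coeff S k) z * u^k)"
proof -
  have "poly S [:u:] = (\<Sum>k\<le>degree S. coeff S k * [:u:]^k)" by (rule poly_altdef)
  then show ?thesis by (simp add: eval2_def poly_sum poly_power)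
qed


theorem mainTheorem10:
  fixes f :: "complex \<Rightarrow> complex" and P Q :: "complex poly"
  assumes "transcendental_entire f"
    and "degree (P - Q) > 0"
  shows "alg_independent (\<lambda>z. f z + poly P z) (\<lambda>z. f z + poly Q z)"
  unfolding alg_independent_def
proof (intro allI impI notI)
  fix R :: "complex poly poly"
  assume R0: "R \<noteq> 0" and Rz: "\<forall>z. eval2 R (f z + poly P z) (f z + poly Q z) = 0"
  have holf: "f holomorphic_on UNIV" and nonpoly: "\<not> (\<exists>p. \<forall>z. f z = poly p z)"
    using assms(1) by (auto simp: transcendental_entire_def)
  define g where "g z = f z + poly P z" for z
  define D where "D = Q - P"
  have degD: "degree D > 0" using assms(2) unfolding D_def by (metis degree_minus minus_diff_eq)
  define S where "S = poly (map_poly (map_poly (\<lambda>c. [:c:])) R) [:D, 1:]"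
  have Sev: "eval2 S z u = eval2 R u (u + poly D z)" for z u
    unfolding S_def by (rule eval_S)
  have S0: "S \<noteq> 0"
  proof
    assume "S = 0"
    then have A: "eval2 R u (u + poly D z) = 0" for u z
      using Sev[of z u] by (simp add: eval2_def)
    have "eval2 R a b = 0" for a b
    proof -
      have "degree (D + [:a - b:]) = degree D" using degD
        by (intro degree_add_eq_left) simp
      moreover have "D + [:a - b:] = D - [:b - a:]" by simp
      ultimately have "degree (D - [:b - a:]) > 0" using degD by simp
      then have "\<not> (\<exists>c l. c \<noteq> 0 \<and> l = 0 \<and> D - [:b - a:] = pCons c l)" by auto
      from fundamental_theorem_of_algebra_alt[OF this] obtain z where "poly (D - [:b - a:]) z = 0" by blast
      then have "b = a + poly D z" by simp
      then show ?thesis using A[of a z] by simp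
    qed
    then show False using eval2_zero_imp R0 by blast
  qed
  have gS: "eval2 S z (g z) = 0" for z
    using Rz Sev[of z "g z"] unfolding g_def D_def by (simp add: algebra_simps)
  define n where "n = degree S"
  define a where "a k = coeff S k" for k
  have an: "a n \<noteq> 0" using S0 unfolding a_def n_def by simp
  obtain c r where c: "c > 0" and cr: "\<And>z. r \<le> norm z \<Longrightarrow> c \<le> norm (poly (a n) z)"
    using poly_lower[OF an] by blast
  define M where "M = (\<Sum>k<n. degree (a k))"
  define C where "C k = (\<Sum>i\<le>degree (a k). norm (coeff (a k) i))" for k
  define B where "B = 1 + (\<Sum>k<n. C k) / c"
  have bound: "norm (g z) \<le> B * norm z ^ M" if z: "max 1 r \<le> norm z" for z
  proof -
    have anz: "poly (a n) z \<noteq> 0" using cr[of z] c z by auto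
    have "(\<Sum>k\<le>n. poly (a k) z * g z ^ k) = 0"
      using gS[of z] unfolding eval2_expand a_def n_def .
    from cauchy_bound[where a="\<lambda>k. poly (a k) z", OF this anz]
    have "norm (g z) \<le> 1 + (\<Sum>k<n. norm (poly (a k) z)) / norm (poly (a n) z)" .
    also have "\<dots> \<le> 1 + (\<Sum>k<n. C k * norm z ^ M) / c"
    proof -
      have "(\<Sum>k<n. norm (poly (a k) z)) \<le> (\<Sum>k<n. C k * norm z ^ M)"
        unfolding C_def M_def using z
        by (intro sum_mono poly_upper) (auto intro: member_le_sum)
      moreover have "(\<Sum>k<n. norm (poly (a k) z)) / norm (poly (a n) z)
          \<le> (\<Sum>k<n. norm (poly (a k) z)) / c"
        using cr[of z] z c by (intro divide_left_mono) (auto simp: sum_nonneg intro!: mult_pos_pos)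
      ultimately show ?thesis using c by (smt (verit) divide_right_mono)
    qed
    also have "\<dots> \<le> B * norm z ^ M"
    proof -
      have "1 \<le> norm z ^ M" using z by (simp add: one_le_power)
      moreover have "0 \<le> (\<Sum>k<n. C k) / c" using c by (simp add: C_def sum_nonneg)
      moreover have "(\<Sum>k<n. C k * norm z ^ M) = (\<Sum>k<n. C k) * norm z ^ M"
        by (simp add: sum_distrib_right)
      ultimately show ?thesis unfolding B_def
        by (simp add: distrib_right)
    qed
    finally show ?thesis .
  qed
  have holg: "g holomorphic_on UNIV" unfolding g_def using holf
    by (intro holomorphic_intros) auto
  have gpoly: "g z = (\<Sum>k\<le>M. (deriv^^k) g 0 / fact k * z ^ k)" for z
    by (rule Liouville_polynomial[OF holg bound])
  define p where "p = (\<Sum>k\<le>M. monom ((deriv^^k) g 0 / fact k) k)"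
  have "f z = poly (p - P) z" for z
    using gpoly[of z] unfolding p_def g_def
    by (simp add: poly_sum poly_monom algebra_simps)
  then show False using nonpoly by blast
qed

end
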